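(* Let $n$ be even, $\alpha$ a character of $F^*$, and $\pi$ a representation of $G_n$. Then $\pi$ is $(H_n,\chi_\alpha)$-distinguished if and only if it is $(H_n,\chi_\alpha^{-1})$-distinguished.
   Context: $F$ non-archimedean local field; $G_n=GL(n,F)$; $\epsilon_n=diag(1,-1,1,\dots)$, $H_n=\{g:\epsilon_ng\epsilon_n=g\}\simeq G_{n/2}\times G_{n/2}$, elements $h(g_1,g_2)$ with $g_1$ on odd-indexed and $g_2$ on even-indexed basis vectors; $\chi_\alpha(h(g_1,g_2))=\alpha(\det g_1/\det g_2)$. $\pi$ is $(H_n,\chi)$-distinguished if $Hom_{H_n}(\pi,\chi)\ne0$. *)

theory Defs
  imports Complex_Main "Jordan_Normal_Form.Determinant"
begin

text \<open>A non-archimedean local field, given by an absolute value av on a field: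
  multiplicative, ultrametric, discrete (with a uniformizer), finite residue field, complete.\<close>
definition nonarch_local_field :: "('F::field \<Rightarrow> real) \<Rightarrow> bool" where
  "nonarch_local_field av \<longleftrightarrow>
     (\<forall>x. av x \<ge> 0) \<and> (\<forall>x. av x = 0 \<longleftrightarrow> x = 0) \<and>
     (\<forall>x y. av (x * y) = av x * av y) \<and>
     (\<forall>x y. av (x + y) \<le> max (av x) (av y)) \<and>
     (\<exists>w. 0 < av w \<and> av w < 1 \<and> (\<forall>x. av x < 1 \<longrightarrow> av x \<le> av w)) \<and>
     (\<exists>R. finite R \<and> (\<forall>x. av x \<le> 1 \<longrightarrow> (\<exists>r\<in>R. av (x - r) < 1))) \<and>
     (\<forall>X::nat \<Rightarrow> 'F. (\<forall>e>0. \<exists>N. \<forall>m\<ge>N. \<forall>k\<ge>N. av (X m - X k) < e) \<longrightarrow>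
        (\<exists>L. \<forall>e>0. \<exists>N. \<forall>m\<ge>N. av (X m - L) < e))"

text \<open>G_n = GL(n,F), matrices indexed 0..n-1 (index i here is basis vector i+1 of the paper).\<close>
definition GL :: "nat \<Rightarrow> 'F::field mat set" where
  "GL n = {g \<in> carrier_mat n n. det g \<noteq> 0}"

text \<open>h(g1,g2): g1 acts on the odd-indexed (paper) basis vectors = even 0-based indices,
  g2 on the even-indexed (paper) = odd 0-based indices. H_n is the set of these.\<close>
definition hmat :: "nat \<Rightarrow> 'F::field mat \<Rightarrow> 'F mat \<Rightarrow> 'F mat" where
  "hmat n g1 g2 = mat n n (\<lambda>(i,j).
      if even i \<and> even j then g1 $$ (i div 2, j div 2)
      else if odd i \<and> odd j then g2 $$ (i div 2, j div 2) else 0)"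

definition Hn :: "nat \<Rightarrow> 'F::field mat set" where
  "Hn n = {hmat n g1 g2 | g1 g2. g1 \<in> GL (n div 2) \<and> g2 \<in> GL (n div 2)}"

definition character :: "('F::field \<Rightarrow> real) \<Rightarrow> ('F \<Rightarrow> complex) \<Rightarrow> bool" where
  "character av \<alpha> \<longleftrightarrow>
     (\<forall>x. x \<noteq> 0 \<longrightarrow> \<alpha> x \<noteq> 0) \<and>
     (\<forall>x y. x \<noteq> 0 \<longrightarrow> y \<noteq> 0 \<longrightarrow> \<alpha> (x * y) = \<alpha> x * \<alpha> y) \<and>
     (\<forall>e>0. \<exists>d>0. \<forall>x. x \<noteq> 0 \<longrightarrow> av (x - 1) < d \<longrightarrow> cmod (\<alpha> x - 1) < e)"

definition smooth_rep :: "('F::field \<Rightarrow> real) \<Rightarrow> nat \<Rightarrow> (complex \<Rightarrow> 'v::ab_group_add \<Rightarrow> 'v)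
    \<Rightarrow> ('F mat \<Rightarrow> 'v \<Rightarrow> 'v) \<Rightarrow> bool" where
  "smooth_rep av n scale \<pi> \<longleftrightarrow>
     Vector_Spaces.vector_space scale \<and>
     (\<forall>g\<in>GL n. Vector_Spaces.linear scale scale (\<pi> g) \<and> bij (\<pi> g)) \<and>
     \<pi> (1\<^sub>m n) = id \<and>
     (\<forall>g\<in>GL n. \<forall>h\<in>GL n. \<pi> (g * h) = \<pi> g \<circ> \<pi> h) \<and>
     (\<forall>v. \<exists>e>0. \<forall>g\<in>GL n. (\<forall>i<n. \<forall>j<n. av (g $$ (i,j) - (1\<^sub>m n) $$ (i,j)) < e)
          \<longrightarrow> \<pi> g v = v)"

definition chi :: "('F::field \<Rightarrow> complex) \<Rightarrow> 'F mat \<Rightarrow> 'F mat \<Rightarrow> complex" where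
  "chi \<alpha> g1 g2 = \<alpha> (det g1 / det g2)"

definition chi_inv :: "('F::field \<Rightarrow> complex) \<Rightarrow> 'F mat \<Rightarrow> 'F mat \<Rightarrow> complex" where
  "chi_inv \<alpha> g1 g2 = inverse (chi \<alpha> g1 g2)"

definition distinguished :: "(complex \<Rightarrow> 'v::ab_group_add \<Rightarrow> 'v) \<Rightarrow> ('F::field mat \<Rightarrow> 'v \<Rightarrow> 'v) \<Rightarrow> nat
    \<Rightarrow> ('F mat \<Rightarrow> 'F mat \<Rightarrow> complex) \<Rightarrow> bool" where
  "distinguished scale \<pi> n \<chi> \<longleftrightarrow>
     (\<exists>l. Vector_Spaces.linear scale ((*) :: complex \<Rightarrow> complex \<Rightarrow> complex) l \<and> l \<noteq> (\<lambda>_. 0) \<and>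
        (\<forall>g1\<in>GL (n div 2). \<forall>g2\<in>GL (n div 2). \<forall>v.
            l (\<pi> (hmat n g1 g2) v) = \<chi> g1 g2 * l v))"

end

theory Submission
  imports Defs
begin

lemma sum_split2: "(\<Sum>k\<in>{0..<2*(m::nat)}. f k) = (\<Sum>k\<in>{0..<m}. f (2*k) + f (2*k+1))"
  by (induction m) (auto simp: sum.atLeast0_lessThan_Suc add.assoc)

lemma GL_inv: assumes "g \<in> GL m" shows "\<exists>g'\<in>carrier_mat m m. g * g' = 1\<^sub>m m"
proof -
  from assms have c: "g \<in> carrier_mat m m" and d: "det g \<noteq> 0" by (auto simp: GL_def)
  from det_non_zero_imp_unit[OF c d, of "()"] show ?thesis
    by (auto simp: Units_def ring_mat_def)
qed

lemma hmat_carrier[simp]: "hmat n a b \<in> carrier_mat n n"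
  by (simp add: hmat_def)

lemma hmat_mult:
  assumes n: "n = 2*m" and a: "a \<in> carrier_mat m m" and b: "b \<in> carrier_mat m m"
    and c: "c \<in> carrier_mat m m" and d: "d \<in> carrier_mat m m"
  shows "hmat n a b * hmat n c d = hmat n (a*c) (b*d)"
proof (rule eq_matI)
  fix i j assume i: "i < dim_row (hmat n (a*c) (b*d))" and j: "j < dim_col (hmat n (a*c) (b*d))"
  hence i': "i < n" and j': "j < n" by (auto simp: hmat_def)
  have id2: "i div 2 < m" "j div 2 < m" using i' j' n by auto
  have "(hmat n a b * hmat n c d) $$ (i,j) =
     (\<Sum>k\<in>{0..<2*m}. hmat n a b $$ (i,k) * hmat n c d $$ (k,j))"
    using i' j' n by (simp add: scalar_prod_def hmat_def)
  also have "\<dots> = (\<Sum>k\<in>{0..<m}. hmat n a b $$ (i,2*k) * hmat n c d $$ (2*k,j)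
        + hmat n a b $$ (i,2*k+1) * hmat n c d $$ (2*k+1,j))"
    by (rule sum_split2)
  also have "\<dots> = (\<Sum>k\<in>{0..<m}.
      (if even i \<and> even j then a $$ (i div 2, k) * c $$ (k, j div 2) else 0) +
      (if odd i \<and> odd j then b $$ (i div 2, k) * d $$ (k, j div 2) else 0))"
    using i' j' n by (intro sum.cong) (auto simp: hmat_def)
  also have "\<dots> = hmat n (a*c) (b*d) $$ (i,j)"
    using i' j' n id2 a b c d by (auto simp: hmat_def scalar_prod_def)
  finally show "(hmat n a b * hmat n c d) $$ (i,j) = hmat n (a*c) (b*d) $$ (i,j)" .
qed (auto simp: hmat_def)

lemma hmat_one: assumes "n = 2*m" shows "hmat n (1\<^sub>m m) (1\<^sub>m m) = (1\<^sub>m n :: 'a::field mat)"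
  using assms by (intro eq_matI) (auto simp: hmat_def, presburger+)

definition sw :: "nat \<Rightarrow> nat" where "sw i = (if even i then i+1 else i-1)"

lemma sw_lt: "even n \<Longrightarrow> i < n \<Longrightarrow> sw i < n"
  unfolding sw_def by (auto elim!: evenE oddE)

lemma sw_sw[simp]: "sw (sw i) = i"
  unfolding sw_def by auto

lemma sw_eq: "(j = sw k) = (k = sw j)"
  using sw_sw by metis

lemma sw_parity[simp]: "even (sw i) = odd i"
  unfolding sw_def by (cases i) auto

lemma sw_div[simp]: "sw i div 2 = i div 2"
  unfolding sw_def by (auto elim!: evenE oddE)

definition wmat :: "nat \<Rightarrow> 'a::field mat" where
  "wmat n = mat n n (\<lambda>(i,j). if j = sw i then 1 else 0)"

lemma wmat_carrier[simp]: "wmat n \<in> carrier_mat n n"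
  by (simp add: wmat_def)

lemma wmat_left:
  assumes n: "even n" and A: "A \<in> carrier_mat n n" and i: "i < n" and j: "j < n"
  shows "(wmat n * A) $$ (i,j) = A $$ (sw i, j)"
proof -
  have "(wmat n * A) $$ (i,j) = (\<Sum>k\<in>{0..<n}. (if k = sw i then 1 else 0) * A $$ (k,j))"
    using A i j by (simp add: scalar_prod_def wmat_def sw_eq)
  also have "\<dots> = A $$ (sw i, j)"
    using sw_lt[OF n i]
    by (subst sum.cong[OF refl, of _ _ "\<lambda>k. if k = sw i then A $$ (k,j) else 0"]) auto
  finally show ?thesis .
qed

lemma wmat_right:
  assumes n: "even n" and A: "A \<in> carrier_mat n n" and i: "i < n" and j: "j < n"
  shows "(A * wmat n) $$ (i,j) = A $$ (i, sw j)"
proof -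
  have "(A * wmat n) $$ (i,j) = (\<Sum>k\<in>{0..<n}. A $$ (i,k) * (if k = sw j then 1 else 0))"
    using A i j by (simp add: scalar_prod_def wmat_def sw_eq)
  also have "\<dots> = A $$ (i, sw j)"
    using sw_lt[OF n j]
    by (subst sum.cong[OF refl, of _ _ "\<lambda>k. if k = sw j then A $$ (i,k) else 0"]) auto
  finally show ?thesis .
qed

lemma wmat_sq: assumes n: "even n" shows "wmat n * wmat n = (1\<^sub>m n :: 'a::field mat)"
proof (rule eq_matI)
  fix i j assume "i < dim_row (1\<^sub>m n :: 'a mat)" "j < dim_col (1\<^sub>m n :: 'a mat)"
  hence i: "i < n" and j: "j < n" by auto
  show "(wmat n * wmat n) $$ (i,j) = (1\<^sub>m n :: 'a mat) $$ (i,j)"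
    using wmat_right[OF n wmat_carrier i j] i j sw_lt[OF n j]
    by (auto simp: wmat_def sw_eq)
qed (auto simp: wmat_def)

lemma wmat_conj:
  assumes n: "even n"
  shows "wmat n * hmat n a b * wmat n = (hmat n b a :: 'a::field mat)"
proof (rule eq_matI)
  fix i j assume "i < dim_row (hmat n b a)" "j < dim_col (hmat n b a)"
  hence i: "i < n" and j: "j < n" by (auto simp: hmat_def)
  have c: "wmat n * hmat n a b \<in> carrier_mat n n"
    using mult_carrier_mat[OF wmat_carrier hmat_carrier] by blast
  show "(wmat n * hmat n a b * wmat n) $$ (i,j) = hmat n b a $$ (i,j)"
    using wmat_right[OF n c i j] wmat_left[OF n hmat_carrier i sw_lt[OF n j]] i j
      sw_lt[OF n i] sw_lt[OF n j]
    by (auto simp: hmat_def)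
qed (auto simp: hmat_def wmat_def)

lemma det_hmat:
  assumes n: "n = 2*m" and g1: "g1 \<in> GL m" and g2: "g2 \<in> GL m"
  shows "hmat n g1 g2 \<in> GL n"
proof -
  obtain h1 where h1: "h1 \<in> carrier_mat m m" "g1 * h1 = 1\<^sub>m m" using GL_inv[OF g1] by blast
  obtain h2 where h2: "h2 \<in> carrier_mat m m" "g2 * h2 = 1\<^sub>m m" using GL_inv[OF g2] by blast
  have "hmat n g1 g2 * hmat n h1 h2 = 1\<^sub>m n"
    using hmat_mult[OF n _ _ h1(1) h2(1), of g1 g2] g1 g2 h1 h2 hmat_one[OF n]
    by (auto simp: GL_def)
  hence "det (hmat n g1 g2) * det (hmat n h1 h2) = 1"
    using det_mult[OF hmat_carrier hmat_carrier, of n g1 g2 h1 h2] by simp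
  thus ?thesis by (auto simp: GL_def)
qed

lemma wmat_GL: assumes "even n" shows "(wmat n :: 'a::field mat) \<in> GL n"
proof -
  have "det (wmat n :: 'a mat) * det (wmat n :: 'a mat) = 1"
  proof -
    have "det (wmat n * wmat n :: 'a mat) = det (wmat n :: 'a mat) * det (wmat n :: 'a mat)"
      by (rule det_mult[OF wmat_carrier wmat_carrier])
    moreover have "det (wmat n * wmat n :: 'a mat) = 1" using wmat_sq[OF assms] by (metis det_one)
    ultimately show ?thesis by simp
  qed
  thus ?thesis by (auto simp: GL_def)
qed

lemma swap_dist:
  fixes scale :: "complex \<Rightarrow> 'v::ab_group_add \<Rightarrow> 'v" and \<pi> :: "'F::field mat \<Rightarrow> 'v \<Rightarrow> 'v"
    and \<chi> \<chi>' :: "'F mat \<Rightarrow> 'F mat \<Rightarrow> complex"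
  assumes n: "even n" and rep: "smooth_rep av n scale \<pi>"
    and d: "distinguished scale \<pi> n \<chi>"
    and sym: "\<And>g1 g2. g1 \<in> GL (n div 2) \<Longrightarrow> g2 \<in> GL (n div 2) \<Longrightarrow> \<chi> g2 g1 = \<chi>' g1 g2"
  shows "distinguished scale \<pi> n \<chi>'"
proof -
  obtain l where lin: "Vector_Spaces.linear scale ((*) :: complex \<Rightarrow> complex \<Rightarrow> complex) l"
    and nz: "l \<noteq> (\<lambda>_. 0)"
    and eq: "\<forall>g1\<in>GL (n div 2). \<forall>g2\<in>GL (n div 2). \<forall>v. l (\<pi> (hmat n g1 g2) v) = \<chi> g1 g2 * l v"
    using d unfolding distinguished_def by blast
  define w where "w = (wmat n :: 'F mat)"
  have wG: "w \<in> GL n" using wmat_GL[OF n] w_def by simp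
  have R: "Vector_Spaces.vector_space scale"
    "\<And>g. g \<in> GL n \<Longrightarrow> Vector_Spaces.linear scale scale (\<pi> g) \<and> bij (\<pi> g)"
    "\<And>g h. g \<in> GL n \<Longrightarrow> h \<in> GL n \<Longrightarrow> \<pi> (g * h) = \<pi> g \<circ> \<pi> h"
    using rep unfolding smooth_rep_def by auto
  obtain m where m: "n = 2*m" using n by blast
  have md: "n div 2 = m" using m by simp
  let ?l = "l \<circ> \<pi> w"
  have "Vector_Spaces.linear scale ((*) :: complex \<Rightarrow> complex \<Rightarrow> complex) ?l"
    using R(2)[OF wG] lin by (intro Vector_Spaces.linear_compose) auto
  moreover have "?l \<noteq> (\<lambda>_. 0)"
  proof
    assume z: "?l = (\<lambda>_. 0)"
    have "l = (\<lambda>_. 0)"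
    proof
      fix v
      obtain u where "v = \<pi> w u" using R(2)[OF wG] by (meson bij_pointE)
      thus "l v = 0" using fun_cong[OF z, of u] by simp
    qed
    thus False using nz by simp
  qed
  moreover have "\<forall>g1\<in>GL (n div 2). \<forall>g2\<in>GL (n div 2). \<forall>v. ?l (\<pi> (hmat n g1 g2) v) = \<chi>' g1 g2 * ?l v"
  proof (intro ballI allI)
    fix g1 g2 :: "'F mat" and v :: 'v assume g1: "g1 \<in> GL (n div 2)" and g2: "g2 \<in> GL (n div 2)"
    have h: "hmat n g1 g2 \<in> GL n" and h': "hmat n g2 g1 \<in> GL n"
      using det_hmat[OF m] g1 g2 md by auto
    have "w * hmat n g1 g2 = hmat n g2 g1 * w"
    proof -
      have "hmat n g2 g1 * w = w * hmat n g1 g2 * w * w" using w_def by (simp add: wmat_conj[OF n])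
      also have "\<dots> = w * hmat n g1 g2 * (w * w)"
        using w_def assoc_mult_mat[OF mult_carrier_mat[OF wmat_carrier hmat_carrier] wmat_carrier wmat_carrier]
        by simp
      also have "\<dots> = w * hmat n g1 g2" using wmat_sq[OF n] w_def
        by (metis hmat_carrier mult_carrier_mat right_mult_one_mat wmat_carrier)
      finally show ?thesis by simp
    qed
    hence "\<pi> w (\<pi> (hmat n g1 g2) v) = \<pi> (hmat n g2 g1) (\<pi> w v)"
      using R(3)[OF wG h] R(3)[OF h' wG] by (metis comp_apply)
    thus "?l (\<pi> (hmat n g1 g2) v) = \<chi>' g1 g2 * ?l v"
      using eq g1 g2 sym[OF g1 g2] by simp
  qed
  ultimately show ?thesis unfolding distinguished_def by blast
qed


lemma char_inv:
  assumes c: "character av \<alpha>" and x: "(x::'F::field) \<noteq> 0"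
  shows "\<alpha> (inverse x) = inverse (\<alpha> x)"
proof -
  have m: "\<And>x y. x \<noteq> 0 \<Longrightarrow> y \<noteq> 0 \<Longrightarrow> \<alpha> (x * y) = \<alpha> x * \<alpha> y"
    and nz: "\<And>x. x \<noteq> 0 \<Longrightarrow> \<alpha> x \<noteq> 0" using c unfolding character_def by auto
  have "\<alpha> 1 = \<alpha> 1 * \<alpha> 1" using m[of 1 1] by simp
  hence one: "\<alpha> 1 = 1" using nz[of 1] by simp
  have "\<alpha> x * \<alpha> (inverse x) = 1" using m[of x "inverse x"] x one by simp
  thus ?thesis by (metis inverse_unique)
qed

theorem mainTheorem8:
  fixes av :: "'F::field \<Rightarrow> real" and \<alpha> :: "'F \<Rightarrow> complex"
    and scale :: "complex \<Rightarrow> 'v::ab_group_add \<Rightarrow> 'v" and \<pi> :: "'F mat \<Rightarrow> 'v \<Rightarrow> 'v" and n :: nat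
  assumes "nonarch_local_field av" and "even n" and "character av \<alpha>"
    and "smooth_rep av n scale \<pi>"
  shows "distinguished scale \<pi> n (chi \<alpha>) \<longleftrightarrow> distinguished scale \<pi> n (chi_inv \<alpha>)"
proof -
  have key: "\<And>g1 g2. g1 \<in> GL (n div 2) \<Longrightarrow> g2 \<in> GL (n div 2) \<Longrightarrow> chi \<alpha> g2 g1 = chi_inv \<alpha> g1 g2"
  proof -
    fix g1 g2 :: "'F mat" assume "g1 \<in> GL (n div 2)" "g2 \<in> GL (n div 2)"
    hence d: "det g1 \<noteq> 0" "det g2 \<noteq> 0" by (auto simp: GL_def)
    have "det g2 / det g1 = inverse (det g1 / det g2)" by (simp add: field_simps)
    thus "chi \<alpha> g2 g1 = chi_inv \<alpha> g1 g2"
      using char_inv[OF assms(3), of "det g1 / det g2"] d by (simp add: chi_def chi_inv_def)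
  qed
  show ?thesis
  proof
    assume "distinguished scale \<pi> n (chi \<alpha>)"
    thus "distinguished scale \<pi> n (chi_inv \<alpha>)"
      by (rule swap_dist[OF assms(2) assms(4)]) (rule key)
  next
    assume "distinguished scale \<pi> n (chi_inv \<alpha>)"
    thus "distinguished scale \<pi> n (chi \<alpha>)"
      by (rule swap_dist[OF assms(2) assms(4)]) (rule key[symmetric])
  qed
qed

end
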